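(* Fix $r\in(0,1)$, $\gamma\in\mathbb R$, $b\in(0,\infty)$ and $\theta\in\mathbb R$ with $\theta/\pi$ irrational. For $\delta\in(0,\tfrac12)$ and integers $q,k\ge1$, $N\ge2$, let $E_{q,k}(\delta,N)$ be the set of all $\beta\in[0,\pi)$ such that $$\sup_{\tau\in[1,r^{-qk}]}\frac1N\#\Big\{n\in[N]:\ \big\|b\tau r^{\,q-qk(N-n)}\cos(\beta+\gamma-nqk\theta)\big\|\le\frac{r^{2qk}}{15}\Big\}>1-\delta,$$ and let $$E=\bigcap_{i\ge3}\ \bigcup_{q,k\ge1}\ \limsup_{N\to\infty}E_{q,k}(1/i,N).$$ Then $\dim_H E=0$.
   Context: For $x\in\mathbb R$, $\|x\|=\min\{|x-j|:j\in\mathbb Z\}$ is the distance to the nearest integer; $[N]=\{1,\dots,N\}$; $\limsup_{N}E_N=\bigcap_{N_0}\bigcup_{N\ge N_0}E_N$. *)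

theory Defs
  imports "HOL-Analysis.Analysis"
begin

definition dist_int :: "real \<Rightarrow> real" where
  "dist_int x = Inf {\<bar>x - of_int j\<bar> | j. True}"

definition hausdorff_pre :: "real \<Rightarrow> real \<Rightarrow> real set \<Rightarrow> ennreal" where
  "hausdorff_pre s d A = (INF U \<in> {U :: nat \<Rightarrow> real set.
       A \<subseteq> (\<Union>i. U i) \<and> (\<forall>i. bounded (U i) \<and> diameter (U i) \<le> d)}.
       (\<Sum>i. ennreal (diameter (U i) powr s)))"

definition hausdorff_measure :: "real \<Rightarrow> real set \<Rightarrow> ennreal" where
  "hausdorff_measure s A = (SUP d \<in> {0<..}. hausdorff_pre s d A)"

definition hausdorff_dim :: "real set \<Rightarrow> real" where
  "hausdorff_dim A = Inf {s. 0 \<le> s \<and> hausdorff_measure s A = 0}"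

definition Eqk :: "real \<Rightarrow> real \<Rightarrow> real \<Rightarrow> real \<Rightarrow> nat \<Rightarrow> nat \<Rightarrow> real \<Rightarrow> nat \<Rightarrow> real set" where
  "Eqk r \<gamma> b \<theta> q k \<delta> N = {\<beta> \<in> {0..<pi}.
     (SUP \<tau> \<in> {1 .. r powr (- real (q*k))}.
        real (card {n \<in> {1..N}.
           dist_int (b * \<tau> * r powr (real q - real (q*k) * (real N - real n))
                     * cos (\<beta> + \<gamma> - real n * real q * real k * \<theta>))
           \<le> r ^ (2*q*k) / 15}) / real N) > 1 - \<delta>}"

definition Eset :: "real \<Rightarrow> real \<Rightarrow> real \<Rightarrow> real \<Rightarrow> real set" where
  "Eset r \<gamma> b \<theta> = (\<Inter>i\<in>{3::nat..}. \<Union>q\<in>{1::nat..}. \<Union>k\<in>{1::nat..}.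
      \<Inter>N0. \<Union>N\<in>{N. N \<ge> N0 \<and> N \<ge> 2}. Eqk r \<gamma> b \<theta> q k (1 / real i) N)"

end

theory Submission
  imports Defs
begin


lemma hp_cover:
  assumes "A \<subseteq> (\<Union>n. U n)" "\<And>n. bounded (U n)" "\<And>n. diameter (U n) \<le> d"
  shows "hausdorff_pre s d A \<le> (\<Sum>n. ennreal (diameter (U n) powr s))"
  unfolding hausdorff_pre_def by (rule INF_lower) (use assms in auto)

lemma sum_prod_decode:
  fixes f :: "nat \<times> nat \<Rightarrow> ennreal"
  shows "(\<Sum>n. f (prod_decode n)) = (\<Sum>p. \<Sum>m. f (p, m))"
proof -
  have "(\<Sum>n. f (prod_decode n)) = (\<integral>\<^sup>+n. f (prod_decode n) \<partial>count_space UNIV)"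
    by (simp add: nn_integral_count_space_nat)
  also have "\<dots> = (\<integral>\<^sup>+x. f x \<partial>count_space UNIV)"
    by (rule nn_integral_bij_count_space) (rule bij_prod_decode)
  also have "\<dots> = (\<integral>\<^sup>+ p. \<integral>\<^sup>+ m. f (p, m) \<partial>count_space UNIV \<partial>count_space UNIV)"
    by (rule nn_integral_fst_count_space[symmetric])
  also have "\<dots> = (\<Sum>p. \<Sum>m. f (p, m))"
    by (simp add: nn_integral_count_space_nat)
  finally show ?thesis .
qed

lemma hp_cover3:
  fixes V :: "nat \<Rightarrow> nat \<Rightarrow> nat \<Rightarrow> real set"
  assumes "A \<subseteq> (\<Union>p. \<Union>N. \<Union>j. V p N j)" "\<And>p N j. bounded (V p N j)"
    "\<And>p N j. diameter (V p N j) \<le> d"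
  shows "hausdorff_pre s d A \<le> (\<Sum>p. \<Sum>N. \<Sum>j. ennreal (diameter (V p N j) powr s))"
proof -
  define U where "U n = (case prod_decode n of (p, m) \<Rightarrow> (case prod_decode m of (N, j) \<Rightarrow> V p N j))" for n
  have "A \<subseteq> (\<Union>n. U n)"
  proof
    fix x assume "x \<in> A"
    then obtain p N j where "x \<in> V p N j" using assms(1) by blast
    then have "x \<in> U (prod_encode (p, prod_encode (N, j)))" by (simp add: U_def)
    then show "x \<in> (\<Union>n. U n)" by blast
  qed
  moreover have "\<And>n. bounded (U n)" "\<And>n. diameter (U n) \<le> d"
    using assms(2,3) by (auto simp: U_def split: prod.splits)
  ultimately have "hausdorff_pre s d A \<le> (\<Sum>n. ennreal (diameter (U n) powr s))"
    by (rule hp_cover)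
  also have "\<dots> = (\<Sum>p. \<Sum>m. (case prod_decode m of (N, j) \<Rightarrow> ennreal (diameter (V p N j) powr s)))"
    using sum_prod_decode[of "\<lambda>(p,m). (case prod_decode m of (N, j) \<Rightarrow> ennreal (diameter (V p N j) powr s))"]
    by (simp add: U_def case_prod_beta)
  also have "\<dots> = (\<Sum>p. \<Sum>N. \<Sum>j. ennreal (diameter (V p N j) powr s))"
    using sum_prod_decode[of "\<lambda>(N,j). ennreal (diameter (V _ N j) powr s)"]
    by (simp add: case_prod_beta)
  finally show ?thesis .
qed

lemma hm_zero:
  assumes "\<And>d \<eta>. 0 < d \<Longrightarrow> 0 < \<eta> \<Longrightarrow> hausdorff_pre s d A \<le> ennreal \<eta>"
  shows "hausdorff_measure s A = 0"
proof -
  have "hausdorff_pre s d A = 0" if "d > 0" for d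
  proof -
    have "hausdorff_pre s d A \<le> 0"
      by (rule ennreal_le_epsilon) (use assms that in auto)
    then show ?thesis by simp
  qed
  then show ?thesis unfolding hausdorff_measure_def by simp
qed

lemma dim_zero:
  assumes "\<And>s. 0 < s \<Longrightarrow> hausdorff_measure s A = 0"
  shows "hausdorff_dim A = 0"
proof -
  let ?S = "{s. 0 \<le> s \<and> hausdorff_measure s A = 0}"
  have bdd: "bdd_below ?S" by (auto intro: bdd_belowI[of _ 0])
  have ne: "1 \<in> ?S" using assms by auto
  have "Inf ?S \<le> e" if "e > 0" for e
    by (rule cInf_lower) (use assms that bdd in auto)
  moreover have "0 \<le> Inf ?S"
    apply (rule cInf_greatest) using ne apply blast by simp
  ultimately show ?thesis unfolding hausdorff_dim_def
    by (meson dense_le_bounded linorder_not_le order_antisym_conv zero_less_one)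
qed



lemma xcos_le_sin:
  fixes x :: real assumes "0 \<le> x" "x \<le> pi" shows "x * cos x \<le> sin x"
proof -
  have "(\<lambda>t. sin t - t * cos t) 0 \<le> (\<lambda>t. sin t - t * cos t) x"
  proof (rule DERIV_nonneg_imp_nondecreasing[OF assms(1)])
    fix t assume t: "0 \<le> t" "t \<le> x"
    have "DERIV (\<lambda>t. sin t - t * cos t) t :> cos t - (1 * cos t + t * (- sin t))"
      by (intro derivative_eq_intros) auto
    moreover have "cos t - (1 * cos t + t * (- sin t)) = t * sin t" by simp
    moreover have "0 \<le> t * sin t" using t assms by (intro mult_nonneg_nonneg sin_ge_zero) auto
    ultimately show "\<exists>y. DERIV (\<lambda>t. sin t - t * cos t) t :> y \<and> 0 \<le> y" by auto
  qed
  then show ?thesis by simp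
qed

lemma jordan:
  fixes x :: real assumes "0 \<le> x" "x \<le> pi/2" shows "2 * x / pi \<le> sin x"
proof (cases "x = 0")
  case True then show ?thesis by simp
next
  case False
  then have x0: "0 < x" using assms by simp
  have "(\<lambda>t. sin t / t) (pi/2) \<le> (\<lambda>t. sin t / t) x"
  proof (rule DERIV_nonpos_imp_nonincreasing[OF assms(2)])
    fix t assume t: "x \<le> t" "t \<le> pi/2"
    then have t0: "0 < t" using x0 by simp
    have "DERIV (\<lambda>t. sin t / t) t :> (cos t * t - sin t * 1) / (t * t)"
      using t0 by (intro derivative_eq_intros) auto
    moreover have "(cos t * t - sin t * 1) / (t * t) \<le> 0"
      using xcos_le_sin[of t] t0 t pi_gt_zero by (intro divide_nonpos_nonneg) (auto simp: mult.commute)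
    ultimately show "\<exists>y. DERIV (\<lambda>t. sin t / t) t :> y \<and> y \<le> 0" by auto
  qed
  then have "1 / (pi/2) \<le> sin x / x" by simp
  then show ?thesis using x0 pi_gt_zero by (simp add: field_simps)
qed

lemma angle_bound:
  fixes \<tau>1 \<tau>2 \<beta>1 \<beta>2 a \<eta> g :: real
  assumes t1: "1 \<le> \<tau>1" and t2: "1 \<le> \<tau>2" and b1: "\<beta>1 \<in> {0..<pi}" and b2: "\<beta>2 \<in> {0..<pi}"
    and sa: "sin a \<noteq> 0"
    and h1: "\<bar>\<tau>1 * cos (\<beta>1 + g - a) - \<tau>2 * cos (\<beta>2 + g - a)\<bar> \<le> \<eta>"
    and h2: "\<bar>\<tau>1 * cos (\<beta>1 + g - 2*a) - \<tau>2 * cos (\<beta>2 + g - 2*a)\<bar> \<le> \<eta>"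
  shows "\<bar>\<beta>1 - \<beta>2\<bar> \<le> 2 * pi * \<eta> / \<bar>sin a\<bar>"
proof -
  define p1 where "p1 = \<beta>1 + g"
  define p2 where "p2 = \<beta>2 + g"
  define vx where "vx = \<tau>1 * cos p1 - \<tau>2 * cos p2"
  define vy where "vy = \<tau>1 * sin p1 - \<tau>2 * sin p2"
  define d1 where "d1 = \<tau>1 * cos (p1 - a) - \<tau>2 * cos (p2 - a)"
  define d2 where "d2 = \<tau>1 * cos (p1 - 2*a) - \<tau>2 * cos (p2 - 2*a)"
  have eta0: "0 \<le> \<eta>" using h1 by linarith
  have D1: "d1 = vx * cos a + vy * sin a" unfolding d1_def vx_def vy_def cos_diff by (simp add: algebra_simps)
  have D2: "d2 = vx * cos (2*a) + vy * sin (2*a)" unfolding d2_def vx_def vy_def cos_diff by (simp add: algebra_simps)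
  have id1: "cos a * sin (2*a) - cos (2*a) * sin a = sin a"
    using sin_diff[of "2*a" a] by (simp add: mult.commute)
  have X: "vx * sin a = d1 * sin (2*a) - d2 * sin a"
  proof -
    have "d1 * sin (2*a) - d2 * sin a = vx * (cos a * sin (2*a) - cos (2*a) * sin a)"
      unfolding D1 D2 by (simp add: algebra_simps)
    then show ?thesis using id1 by simp
  qed
  have Yv: "vy * sin a = d2 * cos a - d1 * cos (2*a)"
  proof -
    have "d2 * cos a - d1 * cos (2*a) = vy * (cos a * sin (2*a) - cos (2*a) * sin a)"
      unfolding D1 D2 by (simp add: algebra_simps)
    then show ?thesis using id1 by simp
  qed
  have ad1: "\<bar>d1\<bar> \<le> \<eta>" using h1 unfolding d1_def p1_def p2_def .
  have ad2: "\<bar>d2\<bar> \<le> \<eta>" using h2 unfolding d2_def p1_def p2_def .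
  have bx: "\<bar>vx\<bar> * \<bar>sin a\<bar> \<le> 2 * \<eta>"
  proof -
    have "\<bar>vx\<bar> * \<bar>sin a\<bar> = \<bar>d1 * sin (2*a) - d2 * sin a\<bar>" using X by (metis abs_mult)
    also have "\<dots> \<le> \<bar>d1\<bar> * \<bar>sin (2*a)\<bar> + \<bar>d2\<bar> * \<bar>sin a\<bar>"
      using abs_triangle_ineq4[of "d1 * sin (2*a)" "d2 * sin a"] by (simp add: abs_mult)
    also have "\<dots> \<le> \<eta> * 1 + \<eta> * 1"
      using ad1 ad2 eta0 by (intro add_mono mult_mono) auto
    finally show ?thesis by simp
  qed
  have by': "\<bar>vy\<bar> * \<bar>sin a\<bar> \<le> 2 * \<eta>"
  proof -
    have "\<bar>vy\<bar> * \<bar>sin a\<bar> = \<bar>d2 * cos a - d1 * cos (2*a)\<bar>" using Yv by (metis abs_mult)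
    also have "\<dots> \<le> \<bar>d2\<bar> * \<bar>cos a\<bar> + \<bar>d1\<bar> * \<bar>cos (2*a)\<bar>"
      using abs_triangle_ineq4[of "d2 * cos a" "d1 * cos (2*a)"] by (simp add: abs_mult)
    also have "\<dots> \<le> \<eta> * 1 + \<eta> * 1"
      using ad1 ad2 eta0 by (intro add_mono mult_mono) auto
    finally show ?thesis by simp
  qed
  define s where "s = \<bar>sin a\<bar>"
  have s0: "0 < s" unfolding s_def using sa by simp
  have s1: "s \<le> 1" unfolding s_def by simp
  have vv: "(vx^2 + vy^2) * s^2 \<le> 8 * \<eta>^2"
  proof -
    have "(\<bar>vx\<bar> * s)^2 \<le> (2*\<eta>)^2" using bx s0 unfolding s_def by (intro power_mono) auto
    moreover have "(\<bar>vy\<bar> * s)^2 \<le> (2*\<eta>)^2" using by' s0 unfolding s_def by (intro power_mono) auto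
    ultimately show ?thesis by (simp add: power_mult_distrib algebra_simps)
  qed
  define \<Delta> where "\<Delta> = \<beta>1 - \<beta>2"
  have vv2: "vx^2 + vy^2 = \<tau>1^2 + \<tau>2^2 - 2*\<tau>1*\<tau>2*cos \<Delta>"
  proof -
    have "cos \<Delta> = cos (p1 - p2)" unfolding \<Delta>_def p1_def p2_def by simp
    moreover have "vx^2+vy^2 = \<tau>1^2*((cos p1)^2+(sin p1)^2) + \<tau>2^2*((cos p2)^2+(sin p2)^2)
        - 2*\<tau>1*\<tau>2*(cos p1 * cos p2 + sin p1 * sin p2)"
      unfolding vx_def vy_def power2_eq_square by algebra
    ultimately show ?thesis by (simp add: cos_diff)
  qed
  have lowc: "2 - 2 * cos \<Delta> \<le> vx^2 + vy^2"
  proof -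
    have "\<tau>1^2 + \<tau>2^2 - 2*\<tau>1*\<tau>2*cos \<Delta> - (2 - 2 * cos \<Delta>) = (\<tau>1 - \<tau>2)^2 + 2*(\<tau>1*\<tau>2 - 1)*(1 - cos \<Delta>)"
      by (simp add: power2_eq_square algebra_simps)
    moreover have "0 \<le> 2*(\<tau>1*\<tau>2 - 1)*(1 - cos \<Delta>)"
    proof -
      have "1 \<le> \<tau>1*\<tau>2" using t1 t2 by (metis mult_mono' mult_1 zero_le_one order_trans)
      then show ?thesis by simp
    qed
    ultimately show ?thesis unfolding vv2 by (smt (verit) zero_le_power2)
  qed
  have dpi: "\<bar>\<Delta>\<bar> \<le> pi" unfolding \<Delta>_def using b1 b2 by auto
  have cd: "2 - 2 * cos \<Delta> = 4 * (sin (\<bar>\<Delta>\<bar>/2))^2"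
  proof -
    have "cos \<Delta> = cos (2 * (\<bar>\<Delta>\<bar>/2))" by (simp add: abs_if)
    then show ?thesis using cos_double_sin[of "\<bar>\<Delta>\<bar>/2"] by simp
  qed
  have "2 * (\<bar>\<Delta>\<bar>/2) / pi \<le> sin (\<bar>\<Delta>\<bar>/2)" using dpi by (intro jordan) auto
  then have jd: "\<bar>\<Delta>\<bar> / pi \<le> sin (\<bar>\<Delta>\<bar>/2)" by simp
  have "(\<bar>\<Delta>\<bar> / pi)^2 \<le> (sin (\<bar>\<Delta>\<bar>/2))^2" using jd pi_gt_zero by (intro power_mono) auto
  then have "4 * (\<bar>\<Delta>\<bar> / pi)^2 \<le> vx^2 + vy^2" using lowc cd by linarith
  then have "4 * (\<bar>\<Delta>\<bar> / pi)^2 * s^2 \<le> 8 * \<eta>^2" using vv s0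
    by (smt (verit) mult_right_mono zero_le_power2)
  then have K: "pi^2/4 * (4 * (\<bar>\<Delta>\<bar> / pi)^2 * s^2) \<le> pi^2/4 * (8 * \<eta>^2)"
    by (rule mult_left_mono) simp
  have e: "(\<bar>\<Delta>\<bar> * s)^2 = pi^2/4 * (4 * (\<bar>\<Delta>\<bar> / pi)^2 * s^2)"
    using pi_gt_zero by (simp add: power_mult_distrib power_divide)
  have f: "pi^2/4 * (8 * \<eta>^2) = 2 * (pi * \<eta>)^2" by (simp add: power_mult_distrib)
  have g: "(2 * pi * \<eta>)^2 = 4 * (pi * \<eta>)^2" by (simp add: power_mult_distrib)
  have "(\<bar>\<Delta>\<bar> * s)^2 \<le> (2 * pi * \<eta>)^2"
  proof -
    have "(\<bar>\<Delta>\<bar> * s)^2 \<le> 2 * (pi * \<eta>)^2" using K unfolding e f .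
    also have "\<dots> \<le> 4 * (pi * \<eta>)^2" by simp
    finally show ?thesis unfolding g .
  qed
  moreover have "0 \<le> 2 * pi * \<eta>" using eta0 pi_gt_zero by simp
  ultimately have "\<bar>\<Delta>\<bar> * s \<le> 2 * pi * \<eta>" by (rule power2_le_imp_le)
  then have "\<bar>\<Delta>\<bar> \<le> 2 * pi * \<eta> / s" using s0 by (simp add: pos_le_divide_eq)
  then show ?thesis unfolding \<Delta>_def s_def .
qed



lemma dist_int_round: "dist_int x = \<bar>x - of_int (round x)\<bar>"
proof -
  let ?S = "{\<bar>x - of_int j\<bar> | j. True}"
  have "Inf ?S = \<bar>x - of_int (round x)\<bar>"
  proof (rule cInf_eq_minimum)
    show "\<bar>x - of_int (round x)\<bar> \<in> ?S" by blast
    fix y assume "y \<in> ?S"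
    then show "\<bar>x - of_int (round x)\<bar> \<le> y" using round_diff_minimal[of x] by auto
  qed
  then show ?thesis unfolding dist_int_def .
qed

locale cfg =
  fixes r \<gamma> b \<theta> :: real and q k N :: nat
  assumes r0: "0 < r" and r1: "r < 1" and b0: "0 < b" and q1: "1 \<le> q" and k1: "1 \<le> k"
    and sa: "sin (real q * real k * \<theta>) \<noteq> 0"
begin

definition "R = r powr (- real (q*k))"
definition "\<alpha> = real q * real k * \<theta>"
definition "Pw n = r powr (real q - real (q*k) * (real N - real n))"
definition "Y n \<beta> \<tau> = b * \<tau> * r powr (real q - real (q*k) * (real N - real n))
                     * cos (\<beta> + \<gamma> - real n * real q * real k * \<theta>)"
definition "good n \<beta> \<tau> \<longleftrightarrow> dist_int (Y n \<beta> \<tau>) \<le> r ^ (2*q*k) / 15"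

lemma R_alt: "R = (1/r) ^ (q*k)"
  using r0 powr_realpow[of r "q*k"] by (simp add: R_def powr_minus_divide power_one_over)

lemma R_ge: "1/r \<le> R"
proof -
  have "1 < 1/r" using r0 r1 by simp
  moreover have "1 \<le> q*k" using q1 k1 by simp
  ultimately have "(1/r)^1 \<le> (1/r)^(q*k)" by (intro power_increasing) auto
  then show ?thesis by (simp add: R_alt)
qed

lemma R_gt1: "1 < R"
proof -
  have "1 < 1/r" using r0 r1 by simp
  then show ?thesis using R_ge by linarith
qed
lemma R_pos: "0 < R" using R_gt1 by simp

lemma r_pow2: "r ^ (2*q*k) = 1 / R^2"
proof -
  have "2*q*k = (q*k)*2" by simp
  then show ?thesis by (simp only: R_alt power_one_over power_mult) simp
qed

lemma Pw_pos: "0 < Pw n" using r0 by (simp add: Pw_def)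

lemma Pw_succ: "Pw n = R * Pw (Suc n)"
proof -
  have "real q - real (q*k) * (real N - real n) =
        (real q - real (q*k) * (real N - real (Suc n))) + (- real (q*k))"
    by (simp add: algebra_simps)
  then have "Pw n = r powr ((real q - real (q*k) * (real N - real (Suc n))) + (- real (q*k)))"
    unfolding Pw_def by (simp only:)
  also have "\<dots> = R * Pw (Suc n)" unfolding powr_add Pw_def R_def by (simp only: mult.commute)
  finally show ?thesis .
qed

lemma Y_Pw: "Y n \<beta> \<tau> = b * \<tau> * Pw n * cos (\<beta> + \<gamma> - real n * \<alpha>)"
  by (simp add: Y_def Pw_def \<alpha>_def mult.assoc)

lemma Yrec: "Y n \<beta> \<tau> = 2 * R * cos \<alpha> * Y (Suc n) \<beta> \<tau> - R^2 * Y (Suc (Suc n)) \<beta> \<tau>"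
proof -
  define x where "x = \<beta> + \<gamma> - real (Suc n) * \<alpha>"
  have e1: "\<beta> + \<gamma> - real n * \<alpha> = x + \<alpha>" unfolding x_def by (simp add: distrib_right)
  have e2: "\<beta> + \<gamma> - real (Suc (Suc n)) * \<alpha> = x - \<alpha>" unfolding x_def by (simp add: distrib_right)
  have p1: "Pw n = R * Pw (Suc n)" and p2: "Pw (Suc n) = R * Pw (Suc (Suc n))"
    by (rule Pw_succ)+
  have y0: "Y n \<beta> \<tau> = b*\<tau>*(R * (R * Pw (Suc (Suc n))))*cos(x+\<alpha>)"
    by (simp only: Y_Pw e1 p1 p2)
  have y1: "Y (Suc n) \<beta> \<tau> = b*\<tau>*(R * Pw (Suc (Suc n)))*cos x"
    by (simp only: Y_Pw x_def p2)
  have y2: "Y (Suc (Suc n)) \<beta> \<tau> = b*\<tau>*Pw (Suc (Suc n))*cos (x - \<alpha>)"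
    by (simp only: Y_Pw e2)
  show ?thesis
    unfolding y0 y1 y2 cos_add cos_diff
    by (simp add: algebra_simps power2_eq_square)
qed

lemma good_round:
  assumes "good n \<beta> \<tau>"
  shows "\<bar>Y n \<beta> \<tau> - of_int (round (Y n \<beta> \<tau>))\<bar> \<le> 1 / (15 * R^2)"
proof -
  have "dist_int (Y n \<beta> \<tau>) \<le> r ^ (2*q*k) / 15" using assms unfolding good_def .
  then show ?thesis unfolding dist_int_round r_pow2 by simp
qed


definition "Q P = {(\<beta>,\<tau>). \<beta> \<in> {0..<pi} \<and> \<tau> \<in> {1..R} \<and> (\<forall>n\<in>P. good n \<beta> \<tau>)}"
definition "cell n = (\<lambda>(\<beta>,\<tau>). (round (Y n \<beta> \<tau>), round (Y (Suc n) \<beta> \<tau>)))"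
definition "Cells P n = cell n ` Q P"
definition "F = 2*R + R^2 + 2"
definition "T = (2*b*R + 5)^2"

lemma int_ball_card:
  fixes c M :: real
  shows "finite {a::int. \<bar>of_int a - c\<bar> \<le> M}" "real (card {a::int. \<bar>of_int a - c\<bar> \<le> M}) \<le> 2*M + 1 \<or> M < 0"
proof -
  have eq: "{a::int. \<bar>of_int a - c\<bar> \<le> M} = {\<lceil>c - M\<rceil>..\<lfloor>c + M\<rfloor>}"
    by (auto simp: abs_le_iff ceiling_le_iff le_floor_iff)
  show "finite {a::int. \<bar>of_int a - c\<bar> \<le> M}" unfolding eq by simp
  show "real (card {a::int. \<bar>of_int a - c\<bar> \<le> M}) \<le> 2*M + 1 \<or> M < 0"
  proof (cases "M < 0")
    case False
    have "real (card {\<lceil>c - M\<rceil>..\<lfloor>c + M\<rfloor>}) = real (nat (\<lfloor>c + M\<rfloor> + 1 - \<lceil>c - M\<rceil>))" by simp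
    also have "\<dots> \<le> 2*M + 1"
    proof -
      have f1: "of_int \<lfloor>c+M\<rfloor> \<le> c+M" by simp
      have f2: "c - M \<le> of_int \<lceil>c-M\<rceil>" by simp
      show ?thesis
      proof (cases "0 \<le> \<lfloor>c + M\<rfloor> + 1 - \<lceil>c - M\<rceil>")
        case True
        then have "real (nat (\<lfloor>c + M\<rfloor> + 1 - \<lceil>c - M\<rceil>)) = of_int \<lfloor>c+M\<rfloor> + 1 - of_int \<lceil>c-M\<rceil>"
          by simp
        then show ?thesis using f1 f2 by linarith
      next
        case False
        then show ?thesis using \<open>\<not> M < 0\<close> by simp
      qed
    qed
    finally show ?thesis unfolding eq by simp
  qed simp
qed

lemma F_ge1: "1 \<le> F" unfolding F_def using R_pos by (smt (verit) zero_le_power2)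

lemma step_gen:
  assumes fin: "finite (Cells P (Suc n))"
  shows "finite (Cells P n) \<and> real (card (Cells P n)) \<le> F * real (card (Cells P (Suc n)))"
proof -
  define M where "M = R + R^2/2 + 1/2"
  define I where "I mm = {a::int. \<bar>of_int a - (2*R*cos \<alpha>* of_int (fst mm) - R^2* of_int (snd mm))\<bar> \<le> M}" for mm :: "int \<times> int"
  have sub: "Cells P n \<subseteq> (\<Union>mm\<in>Cells P (Suc n). (\<lambda>a. (a, fst mm)) ` I mm)"
  proof
    fix z assume "z \<in> Cells P n"
    then obtain \<beta> \<tau> where bt: "(\<beta>,\<tau>) \<in> Q P" and z: "z = cell n (\<beta>,\<tau>)"
      unfolding Cells_def by auto
    define m where "m = round (Y (Suc n) \<beta> \<tau>)"
    define m' where "m' = round (Y (Suc (Suc n)) \<beta> \<tau>)"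
    have mm: "(m, m') \<in> Cells P (Suc n)" using bt unfolding Cells_def cell_def m_def m'_def
      by (auto intro!: image_eqI[where x="(\<beta>,\<tau>)"])
    have a1: "\<bar>Y (Suc n) \<beta> \<tau> - m\<bar> \<le> 1/2" unfolding m_def using of_int_round_abs_le by (metis abs_minus_commute)
    have a2: "\<bar>Y (Suc (Suc n)) \<beta> \<tau> - m'\<bar> \<le> 1/2" unfolding m'_def using of_int_round_abs_le by (metis abs_minus_commute)
    have a0: "\<bar>of_int (round (Y n \<beta> \<tau>)) - Y n \<beta> \<tau>\<bar> \<le> 1/2" by (rule of_int_round_abs_le)
    have "Y n \<beta> \<tau> - (2*R*cos \<alpha>*m - R^2*m') = 2*R*cos \<alpha>*(Y (Suc n) \<beta> \<tau> - m) - R^2*(Y (Suc (Suc n)) \<beta> \<tau> - m')"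
      by (subst Yrec[of n]) (simp add: algebra_simps)
    also have "\<bar>\<dots>\<bar> \<le> 2*R*1*(1/2) + R^2*(1/2)"
    proof -
      have "\<bar>2*R*cos \<alpha>*(Y (Suc n) \<beta> \<tau> - m)\<bar> \<le> 2*R*1*(1/2)"
        unfolding abs_mult using R_pos a1 by (intro mult_mono) auto
      moreover have "\<bar>R^2*(Y (Suc (Suc n)) \<beta> \<tau> - m')\<bar> \<le> R^2*(1/2)"
        unfolding abs_mult using R_pos a2 by (intro mult_mono) auto
      ultimately show ?thesis by linarith
    qed
    finally have "\<bar>of_int (round (Y n \<beta> \<tau>)) - (2*R*cos \<alpha>*m - R^2*m')\<bar> \<le> M"
      using a0 unfolding M_def by linarith
    then have inI: "round (Y n \<beta> \<tau>) \<in> I (m, m')" unfolding I_def by simp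
    have zz: "z = (round (Y n \<beta> \<tau>), m)" unfolding z cell_def m_def by simp
    show "z \<in> (\<Union>mm\<in>Cells P (Suc n). (\<lambda>a. (a, fst mm)) ` I mm)"
      by (rule UN_I[OF mm]) (use zz inI in simp)
  qed
  have finI: "finite (I mm)" for mm unfolding I_def by (rule int_ball_card(1))
  have M0: "M \<ge> 0" unfolding M_def using R_pos by (simp add: add_nonneg_nonneg)
  have cardI: "real (card (I mm)) \<le> F" for mm
  proof -
    have "real (card (I mm)) \<le> 2*M+1" using int_ball_card(2) M0 unfolding I_def by fastforce
    then show ?thesis unfolding M_def F_def by simp
  qed
  have finU: "finite (\<Union>mm\<in>Cells P (Suc n). (\<lambda>a. (a, fst mm)) ` I mm)"
    using fin finI by blast
  have "card (Cells P n) \<le> card (\<Union>mm\<in>Cells P (Suc n). (\<lambda>a. (a, fst mm)) ` I mm)"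
    by (rule card_mono[OF finU sub])
  also have "\<dots> \<le> (\<Sum>mm\<in>Cells P (Suc n). card ((\<lambda>a. (a, fst mm)) ` I mm))"
    by (rule card_UN_le[OF fin])
  finally have "real (card (Cells P n)) \<le> real (\<Sum>mm\<in>Cells P (Suc n). card ((\<lambda>a. (a, fst mm)) ` I mm))"
    by (simp only: of_nat_le_iff)
  also have "\<dots> = (\<Sum>mm\<in>Cells P (Suc n). real (card ((\<lambda>a. (a, fst mm)) ` I mm)))"
    by (rule of_nat_sum)
  also have "\<dots> \<le> real (card (Cells P (Suc n))) * F"
  proof (rule sum_bounded_above)
    fix mm assume "mm \<in> Cells P (Suc n)"
    have "card ((\<lambda>a. (a, fst mm)) ` I mm) \<le> card (I mm)" by (rule card_image_le[OF finI])
    then show "real (card ((\<lambda>a. (a, fst mm)) ` I mm)) \<le> F" using cardI[of mm] by linarith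
  qed
  finally show ?thesis using finite_subset[OF sub finU] by (simp add: mult.commute)
qed

lemma step_good:
  assumes "n \<in> P" "Suc n \<in> P" "Suc (Suc n) \<in> P"
  shows "Cells P n \<subseteq> (\<lambda>mm::int\<times>int. (round (2*R*cos \<alpha> * of_int (fst mm) - R^2 * of_int (snd mm)), fst mm)) ` Cells P (Suc n)"
proof
  fix z assume "z \<in> Cells P n"
  then obtain \<beta> \<tau> where bt: "(\<beta>,\<tau>) \<in> Q P" and z: "z = cell n (\<beta>,\<tau>)"
    unfolding Cells_def by auto
  have g: "good j \<beta> \<tau>" if "j \<in> P" for j using bt that unfolding Q_def by auto
  define m where "m = round (Y (Suc n) \<beta> \<tau>)"
  define m' where "m' = round (Y (Suc (Suc n)) \<beta> \<tau>)"
  have mm: "(m, m') \<in> Cells P (Suc n)" using bt unfolding Cells_def cell_def m_def m'_def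
    by (auto intro!: image_eqI[where x="(\<beta>,\<tau>)"])
  define e where "e = 1 / (15 * R^2)"
  have e0: "0 \<le> e" unfolding e_def using R_pos by simp
  have a1: "\<bar>Y (Suc n) \<beta> \<tau> - m\<bar> \<le> e" unfolding m_def e_def by (rule good_round[OF g[OF assms(2)]])
  have a2: "\<bar>Y (Suc (Suc n)) \<beta> \<tau> - m'\<bar> \<le> e" unfolding m'_def e_def by (rule good_round[OF g[OF assms(3)]])
  have a0: "\<bar>Y n \<beta> \<tau> - of_int (round (Y n \<beta> \<tau>))\<bar> \<le> e" unfolding e_def by (rule good_round[OF g[OF assms(1)]])
  have "Y n \<beta> \<tau> - (2*R*cos \<alpha>*m - R^2*m') = 2*R*cos \<alpha>*(Y (Suc n) \<beta> \<tau> - m) - R^2*(Y (Suc (Suc n)) \<beta> \<tau> - m')"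
    by (subst Yrec[of n]) (simp add: algebra_simps)
  also have "\<bar>\<dots>\<bar> \<le> 2*R*1*e + R^2*e"
  proof -
    have "\<bar>2*R*cos \<alpha>*(Y (Suc n) \<beta> \<tau> - m)\<bar> \<le> 2*R*1*e"
      unfolding abs_mult using R_pos a1 by (intro mult_mono) auto
    moreover have "\<bar>R^2*(Y (Suc (Suc n)) \<beta> \<tau> - m')\<bar> \<le> R^2*e"
      unfolding abs_mult using R_pos a2 by (intro mult_mono) auto
    ultimately show ?thesis by linarith
  qed
  also have "\<dots> \<le> 3 / 15"
  proof -
    have "2*R*1*e = 2/(15*R)" unfolding e_def using R_pos by (simp add: power2_eq_square)
    also have "\<dots> \<le> 2/15" using R_gt1 by (simp add: field_simps)
    finally have "2*R*1*e \<le> 2/15" .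
    moreover have "R^2*e = 1/15" unfolding e_def using R_pos by simp
    ultimately show ?thesis by linarith
  qed
  finally have h: "\<bar>Y n \<beta> \<tau> - (2*R*cos \<alpha>*m - R^2*m')\<bar> \<le> 3/15" .
  have "e \<le> 1/15" unfolding e_def using R_gt1 by (simp add: field_simps)
  then have "\<bar>(2*R*cos \<alpha>*m - R^2*m') - of_int (round (Y n \<beta> \<tau>))\<bar> < 1/2" using h a0 by linarith
  then have "round (2*R*cos \<alpha>*m - R^2*m') = round (Y n \<beta> \<tau>)" by (rule round_unique')
  then show "z \<in> (\<lambda>mm::int\<times>int. (round (2*R*cos \<alpha> * of_int (fst mm) - R^2 * of_int (snd mm)), fst mm)) ` Cells P (Suc n)"
    using mm unfolding z cell_def m_def by (auto intro!: image_eqI[where x="(m,m')"] simp: m_def)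
qed

lemma Y_bound:
  assumes "1 \<le> \<tau>" "\<tau> \<le> R" "N \<le> n"
  shows "\<bar>Y n \<beta> \<tau>\<bar> \<le> b * R"
proof -
  have "Pw n \<le> 1"
  proof -
    have "real N - real n \<le> 0" using assms(3) by simp
    then have "real (q*k) * (real N - real n) \<le> 0" by (simp add: mult_nonneg_nonpos)
    then have "0 \<le> real q - real (q*k) * (real N - real n)" by linarith
    then show ?thesis unfolding Pw_def using r0 r1 by (intro powr_le1) auto
  qed
  then have "\<bar>Y n \<beta> \<tau>\<bar> \<le> b * R * 1 * 1"
    unfolding Y_Pw abs_mult using assms b0 Pw_pos[of n]
    by (intro mult_mono) auto
  then show ?thesis by simp
qed

lemma top_bound: "finite (Cells P N) \<and> real (card (Cells P N)) \<le> T"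
proof -
  define M0 where "M0 = \<lceil>b*R\<rceil> + 1"
  have sub: "Cells P N \<subseteq> {-M0..M0} \<times> {-M0..M0}"
  proof
    fix z assume "z \<in> Cells P N"
    then obtain \<beta> \<tau> where bt: "(\<beta>,\<tau>) \<in> Q P" and z: "z = cell N (\<beta>,\<tau>)"
      unfolding Cells_def by auto
    have t: "1 \<le> \<tau>" "\<tau> \<le> R" using bt unfolding Q_def by auto
    have "\<bar>(of_int (round y)::real)\<bar> \<le> of_int M0" if "\<bar>y\<bar> \<le> b*R" for y
    proof -
      have "\<bar>of_int (round y)\<bar> \<le> \<bar>y\<bar> + 1/2" using of_int_round_abs_le[of y] by linarith
      moreover have "b*R \<le> of_int \<lceil>b*R\<rceil>" by (rule le_of_int_ceiling)
      ultimately show ?thesis unfolding M0_def using that by (simp only: of_int_add of_int_1)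
    qed
    then have "\<bar>round (Y n \<beta> \<tau>)\<bar> \<le> M0" if "N \<le> n" for n
      using Y_bound[OF t that] by (metis of_int_abs of_int_le_iff)
    then have h1: "\<bar>round (Y N \<beta> \<tau>)\<bar> \<le> M0" and h2: "\<bar>round (Y (Suc N) \<beta> \<tau>)\<bar> \<le> M0" by auto
    show "z \<in> {-M0..M0} \<times> {-M0..M0}" unfolding z cell_def
      using h1 h2 by (auto simp: abs_le_iff)
  qed
  have "card (Cells P N) \<le> card ({-M0..M0} \<times> {-M0..M0})"
    using card_mono[OF _ sub] by simp
  then have "real (card (Cells P N)) \<le> real (card ({-M0..M0} \<times> {-M0..M0}))"
    by (simp only: of_nat_le_iff)
  also have "\<dots> = (real (nat (2*M0+1)))^2" by (simp add: card_cartesian_product power2_eq_square)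
  also have "\<dots> \<le> T"
  proof -
    have "0 < b*R" using b0 R_pos by simp
    then have "0 \<le> M0" unfolding M0_def by (simp add: ceiling_le_zero[symmetric] order.strict_implies_order)
    then have "real (nat (2*M0+1)) = 2* of_int M0 + 1" by simp
    also have "\<dots> \<le> 2*b*R + 5" unfolding M0_def using ceiling_correct[of "b*R"] by simp
    finally show ?thesis unfolding T_def using \<open>0 \<le> M0\<close> by (intro power_mono) auto
  qed
  finally show ?thesis using finite_subset[OF sub] by simp
qed

definition "BS P n = {m \<in> {n..<N}. \<not> (m \<in> P \<and> Suc m \<in> P \<and> Suc (Suc m) \<in> P)}"

lemma chain:
  assumes "n \<le> N"
  shows "finite (Cells P n) \<and> real (card (Cells P n)) \<le> T * F ^ card (BS P n)"
  using assms
proof (induction n rule: inc_induct)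
  case base
  have "BS P N = {}" unfolding BS_def by auto
  then show ?case using top_bound by simp
next
  case (step n)
  note IH = step.IH
  show ?case
  proof (cases "n \<in> P \<and> Suc n \<in> P \<and> Suc (Suc n) \<in> P")
    case True
    then have bs: "BS P n = BS P (Suc n)" unfolding BS_def using step.hyps
      by auto (metis Suc_leI le_neq_implies_less)+
    define g where "g = (\<lambda>mm::int\<times>int. (round (2*R*cos \<alpha> * of_int (fst mm) - R^2 * of_int (snd mm)), fst mm))"
    have sub: "Cells P n \<subseteq> g ` Cells P (Suc n)"
      unfolding g_def using step_good True by blast
    have finS: "finite (Cells P (Suc n))" using IH by blast
    have fin: "finite (Cells P n)" using finite_subset[OF sub finite_imageI[OF finS]] .
    have "card (Cells P n) \<le> card (g ` Cells P (Suc n))" by (rule card_mono[OF finite_imageI[OF finS] sub])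
    also have "\<dots> \<le> card (Cells P (Suc n))" by (rule card_image_le[OF finS])
    finally have "real (card (Cells P n)) \<le> real (card (Cells P (Suc n)))" by (simp only: of_nat_le_iff)
    then show ?thesis using IH fin bs by simp
  next
    case False
    then have bs: "BS P n = insert n (BS P (Suc n))" unfolding BS_def using step.hyps by auto
    have nn: "n \<notin> BS P (Suc n)" unfolding BS_def by auto
    have finBS: "finite (BS P (Suc n))" unfolding BS_def by auto
    have cb: "card (BS P n) = Suc (card (BS P (Suc n)))" unfolding bs using nn finBS by simp
    from step_gen[of P n] IH have h: "finite (Cells P n)" "real (card (Cells P n)) \<le> F * real (card (Cells P (Suc n)))"
      by auto
    have "F * real (card (Cells P (Suc n))) \<le> F * (T * F ^ card (BS P (Suc n)))"
      using IH F_ge1 by (intro mult_left_mono) auto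
    also have "\<dots> = T * F ^ card (BS P n)" unfolding cb by simp
    finally show ?thesis using h by linarith
  qed
qed


lemma BS_card: "card (BS P 1) \<le> 3 * card ({1..Suc N} - P)"
proof -
  define C where "C = {1..Suc N} - P"
  have sub: "BS P 1 \<subseteq> C \<union> (\<lambda>x. x - 1) ` C \<union> (\<lambda>x. x - 2) ` C"
  proof
    fix m assume "m \<in> BS P 1"
    then have m: "1 \<le> m" "m < N" "\<not> (m \<in> P \<and> Suc m \<in> P \<and> Suc (Suc m) \<in> P)" unfolding BS_def by auto
    show "m \<in> C \<union> (\<lambda>x. x - 1) ` C \<union> (\<lambda>x. x - 2) ` C"
    proof (cases "m \<in> P")
      case False then show ?thesis using m unfolding C_def by auto
    next
      case True
      show ?thesis
      proof (cases "Suc m \<in> P")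
        case False
        then have "Suc m \<in> C" using m unfolding C_def by auto
        then show ?thesis by (intro UnI1 UnI2) (rule image_eqI[where x="Suc m"], auto)
      next
        case True2: True
        then have "Suc (Suc m) \<notin> P" using m True by auto
        then have "Suc (Suc m) \<in> C" using m unfolding C_def by auto
        then show ?thesis by (intro UnI2) (rule image_eqI[where x="Suc (Suc m)"], auto)
      qed
    qed
  qed
  have fC: "finite C" unfolding C_def by auto
  have "card (BS P 1) \<le> card (C \<union> (\<lambda>x. x - 1) ` C \<union> (\<lambda>x. x - 2) ` C)"
    by (rule card_mono) (use fC sub in auto)
  also have "\<dots> \<le> card C + card ((\<lambda>x. x - 1) ` C) + card ((\<lambda>x. x - 2) ` C)"
    by (metis (no_types, lifting) card_Un_le add_le_mono le_refl order_trans)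
  also have "\<dots> \<le> card C + card C + card C"
    by (intro add_mono card_image_le fC le_refl)
  finally show ?thesis unfolding C_def by simp
qed

definition "Dm = 2 * pi / (\<bar>sin \<alpha>\<bar> * (b * Pw 2))"

lemma Dm_pos: "0 < Dm"
  unfolding Dm_def using sa b0 Pw_pos[of 2] by (simp add: \<alpha>_def)

lemma cell_diam:
  assumes "(\<beta>1,\<tau>1) \<in> Q P" "(\<beta>2,\<tau>2) \<in> Q P" "cell 1 (\<beta>1,\<tau>1) = cell 1 (\<beta>2,\<tau>2)"
  shows "\<bar>\<beta>1 - \<beta>2\<bar> \<le> Dm"
proof -
  have t: "1 \<le> \<tau>1" "1 \<le> \<tau>2" "\<beta>1 \<in> {0..<pi}" "\<beta>2 \<in> {0..<pi}" using assms(1,2) unfolding Q_def by auto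
  have r1: "round (Y 1 \<beta>1 \<tau>1) = round (Y 1 \<beta>2 \<tau>2)" and r2: "round (Y 2 \<beta>1 \<tau>1) = round (Y 2 \<beta>2 \<tau>2)"
    using assms(3) unfolding cell_def by (auto simp: numeral_2_eq_2)
  have d1: "\<bar>Y 1 \<beta>1 \<tau>1 - Y 1 \<beta>2 \<tau>2\<bar> < 1" by (rule round_eq_imp_diff_1[OF r1])
  have d2: "\<bar>Y 2 \<beta>1 \<tau>1 - Y 2 \<beta>2 \<tau>2\<bar> < 1" by (rule round_eq_imp_diff_1[OF r2])
  define \<eta> where "\<eta> = 1 / (b * Pw 2)"
  have bp2: "0 < b * Pw 2" using b0 Pw_pos by simp
  have p12: "Pw 2 \<le> Pw 1"
  proof -
    have "Pw 1 = R * Pw 2" using Pw_succ[of 1] by (simp add: numeral_2_eq_2)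
    then show ?thesis using R_gt1 Pw_pos[of 2] by simp
  qed
  have h1: "\<bar>\<tau>1 * cos (\<beta>1 + \<gamma> - \<alpha>) - \<tau>2 * cos (\<beta>2 + \<gamma> - \<alpha>)\<bar> \<le> \<eta>"
  proof -
    have "Y 1 \<beta>1 \<tau>1 - Y 1 \<beta>2 \<tau>2 = (b * Pw 1) * (\<tau>1 * cos (\<beta>1 + \<gamma> - \<alpha>) - \<tau>2 * cos (\<beta>2 + \<gamma> - \<alpha>))"
      unfolding Y_Pw by (simp add: algebra_simps)
    then have "(b * Pw 1) * \<bar>\<tau>1 * cos (\<beta>1 + \<gamma> - \<alpha>) - \<tau>2 * cos (\<beta>2 + \<gamma> - \<alpha>)\<bar> < 1"
      using d1 b0 Pw_pos[of 1] by (simp add: abs_mult)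
    moreover have "b * Pw 2 \<le> b * Pw 1" using p12 b0 by simp
    ultimately have "(b * Pw 2) * \<bar>\<tau>1 * cos (\<beta>1 + \<gamma> - \<alpha>) - \<tau>2 * cos (\<beta>2 + \<gamma> - \<alpha>)\<bar> \<le> 1"
      by (smt (verit) abs_ge_zero mult_right_mono)
    then show ?thesis unfolding \<eta>_def using bp2 by (simp add: field_simps)
  qed
  have h2: "\<bar>\<tau>1 * cos (\<beta>1 + \<gamma> - 2*\<alpha>) - \<tau>2 * cos (\<beta>2 + \<gamma> - 2*\<alpha>)\<bar> \<le> \<eta>"
  proof -
    have "Y 2 \<beta>1 \<tau>1 - Y 2 \<beta>2 \<tau>2 = (b * Pw 2) * (\<tau>1 * cos (\<beta>1 + \<gamma> - 2*\<alpha>) - \<tau>2 * cos (\<beta>2 + \<gamma> - 2*\<alpha>))"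
      unfolding Y_Pw by (simp add: algebra_simps)
    then have "(b * Pw 2) * \<bar>\<tau>1 * cos (\<beta>1 + \<gamma> - 2*\<alpha>) - \<tau>2 * cos (\<beta>2 + \<gamma> - 2*\<alpha>)\<bar> < 1"
      using d2 b0 Pw_pos[of 2] by (simp add: abs_mult)
    then show ?thesis unfolding \<eta>_def using bp2 by (simp add: field_simps)
  qed
  have "\<bar>\<beta>1 - \<beta>2\<bar> \<le> 2 * pi * \<eta> / \<bar>sin \<alpha>\<bar>"
    by (rule angle_bound[OF t sa[folded \<alpha>_def] h1 h2])
  also have "\<dots> = Dm" unfolding Dm_def \<eta>_def by simp
  finally show ?thesis .
qed

end

locale cfg2 = cfg +
  fixes l :: nat and \<delta> :: real
  assumes l1: "1 \<le> l" and N1: "1 \<le> N"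
begin

definition "PD D = {n \<in> {1..N}. n div l \<notin> D}"
definition "U D c = {\<beta>. \<exists>\<tau>. (\<beta>,\<tau>) \<in> Q (PD D) \<and> cell 1 (\<beta>,\<tau>) = c}"
definition "Dset = {D. D \<subseteq> {..N div l} \<and> real (card D) < \<delta> * real N}"
definition "X = (\<lambda>(D,c). U D c) ` (SIGMA D:Dset. Cells (PD D) 1)"

lemma cover: "Eqk r \<gamma> b \<theta> q k \<delta> N \<subseteq> \<Union> X"
proof
  fix \<beta> assume "\<beta> \<in> Eqk r \<gamma> b \<theta> q k \<delta> N"
  then have b: "\<beta> \<in> {0..<pi}" and sup: "1 - \<delta> < (SUP \<tau> \<in> {1..R}. real (card {n \<in> {1..N}. good n \<beta> \<tau>}) / real N)"
    unfolding Eqk_def good_def Y_def R_def by auto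
  have ne: "{1..R} \<noteq> {}" using R_gt1 by simp
  have bdd: "bdd_above ((\<lambda>\<tau>. real (card {n \<in> {1..N}. good n \<beta> \<tau>}) / real N) ` {1..R})"
  proof (rule bdd_aboveI[where M="real N"])
    fix x assume "x \<in> (\<lambda>\<tau>. real (card {n \<in> {1..N}. good n \<beta> \<tau>}) / real N) ` {1..R}"
    then obtain \<tau> where x: "x = real (card {n \<in> {1..N}. good n \<beta> \<tau>}) / real N" by auto
    have "card {n \<in> {1..N}. good n \<beta> \<tau>} \<le> card {1..N}" by (rule card_mono) auto
    then have "real (card {n \<in> {1..N}. good n \<beta> \<tau>}) \<le> real N" by simp
    moreover have "real (card {n \<in> {1..N}. good n \<beta> \<tau>}) / real N \<le> real (card {n \<in> {1..N}. good n \<beta> \<tau>})"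
      using N1 by (simp add: divide_le_eq mult_le_cancel_left1)
    ultimately show "x \<le> real N" unfolding x by linarith
  qed
  obtain \<tau> where tau: "\<tau> \<in> {1..R}" and big: "1 - \<delta> < real (card {n \<in> {1..N}. good n \<beta> \<tau>}) / real N"
    using sup less_cSUP_iff[OF ne bdd] by blast
  define G where "G = {n \<in> {1..N}. good n \<beta> \<tau>}"
  define Bad where "Bad = {1..N} - G"
  have NG: "card G + card Bad = N" unfolding Bad_def G_def
    by (metis (no_types, lifting) card_Diff_subset card_atLeastAtMost diff_Suc_1 le_add_diff_inverse
        card_mono finite_atLeastAtMost mem_Collect_eq subsetI finite_subset)
  have "(1 - \<delta>) * real N < real (card G)" using big N1 unfolding G_def by (simp add: field_simps)
  then have cB: "real (card Bad) < \<delta> * real N" using NG by (simp add: algebra_simps of_nat_add[symmetric] del: of_nat_add)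
  define D where "D = (\<lambda>n. n div l) ` Bad"
  have finB: "finite Bad" unfolding Bad_def by simp
  have DD: "D \<in> Dset"
  proof -
    have "D \<subseteq> {..N div l}" unfolding D_def Bad_def by (auto intro: div_le_mono)
    moreover have "card D \<le> card Bad" unfolding D_def by (rule card_image_le[OF finB])
    ultimately show ?thesis unfolding Dset_def using cB by auto
  qed
  have PG: "PD D \<subseteq> G" unfolding PD_def D_def Bad_def by auto
  have Q: "(\<beta>,\<tau>) \<in> Q (PD D)" unfolding Q_def using b tau PG unfolding G_def by auto
  have "cell 1 (\<beta>,\<tau>) \<in> Cells (PD D) 1" unfolding Cells_def using Q by auto
  then have "U D (cell 1 (\<beta>,\<tau>)) \<in> X" unfolding X_def using DD by force
  moreover have "\<beta> \<in> U D (cell 1 (\<beta>,\<tau>))" unfolding U_def using Q by auto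
  ultimately show "\<beta> \<in> \<Union> X" by blast
qed

lemma X_sets: "x \<in> X \<Longrightarrow> bounded x \<and> diameter x \<le> Dm"
proof -
  assume "x \<in> X"
  then obtain D c where x: "x = U D c" unfolding X_def by auto
  have sub: "x \<subseteq> {0..pi}" unfolding x U_def Q_def by auto
  have "bounded x" by (rule bounded_subset[OF bounded_closed_interval sub])
  moreover have "diameter x \<le> Dm"
  proof (rule diameter_le)
    show "x \<noteq> {} \<or> 0 \<le> Dm" using Dm_pos by simp
    fix y z assume "y \<in> x" "z \<in> x"
    then obtain t1 t2 where "(y,t1) \<in> Q (PD D)" "cell 1 (y,t1) = c" "(z,t2) \<in> Q (PD D)" "cell 1 (z,t2) = c"
      unfolding x U_def by auto
    then show "norm (y - z) \<le> Dm" using cell_diam by (metis real_norm_def)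
  qed
  ultimately show "bounded x \<and> diameter x \<le> Dm" by simp
qed

lemma card_cells_D:
  assumes "D \<in> Dset"
  shows "finite (Cells (PD D) 1) \<and> real (card (Cells (PD D) 1)) \<le> T * F powr (3 * (real l * \<delta> * real N + 1))"
proof -
  have ch: "finite (Cells (PD D) 1) \<and> real (card (Cells (PD D) 1)) \<le> T * F ^ card (BS (PD D) 1)"
    using chain[of 1 "PD D"] N1 by simp
  have finD: "finite D" using assms unfolding Dset_def by (auto intro: finite_subset)
  have c1: "{n \<in> {1..N}. n div l \<in> D} \<subseteq> (\<Union>t\<in>D. {t*l..<t*l+l})"
  proof
    fix n assume "n \<in> {n \<in> {1..N}. n div l \<in> D}"
    then have "n div l \<in> D" by auto
    have e: "n div l * l + n mod l = n" by (rule div_mult_mod_eq)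
    have m: "n mod l < l" using l1 by simp
    have "n \<in> {n div l * l..<n div l * l + l}" using e m by (simp only: atLeastLessThan_iff) linarith
    then show "n \<in> (\<Union>t\<in>D. {t*l..<t*l+l})" using \<open>n div l \<in> D\<close> by blast
  qed
  have "card {n \<in> {1..N}. n div l \<in> D} \<le> card (\<Union>t\<in>D. {t*l..<t*l+l})"
    by (rule card_mono[OF _ c1]) (use finD in auto)
  also have "\<dots> \<le> (\<Sum>t\<in>D. card {t*l..<t*l+l})" by (rule card_UN_le[OF finD])
  also have "\<dots> = l * card D" by simp
  finally have cA: "card {n \<in> {1..N}. n div l \<in> D} \<le> l * card D" .
  have "{1..Suc N} - PD D \<subseteq> insert (Suc N) {n \<in> {1..N}. n div l \<in> D}" unfolding PD_def by auto
  then have "card ({1..Suc N} - PD D) \<le> card (insert (Suc N) {n \<in> {1..N}. n div l \<in> D})"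
    by (intro card_mono) auto
  also have "\<dots> \<le> Suc (card {n \<in> {1..N}. n div l \<in> D})" by (rule card_insert_le_m1) auto
  finally have "card ({1..Suc N} - PD D) \<le> l * card D + 1" using cA by linarith
  then have bs: "card (BS (PD D) 1) \<le> 3 * (l * card D + 1)" using BS_card[of "PD D"] by (meson mult_le_mono2 order_trans)
  have "real (card (BS (PD D) 1)) \<le> real (3 * (l * card D + 1))"
    using bs by (simp only: of_nat_le_iff)
  also have "\<dots> = 3 * (real l * real (card D) + 1)" by simp
  also have "\<dots> \<le> 3 * (real l * \<delta> * real N + 1)"
    using assms l1 unfolding Dset_def by (auto intro!: mult_left_mono simp: mult.assoc)
  finally have e: "real (card (BS (PD D) 1)) \<le> 3 * (real l * \<delta> * real N + 1)" .
  have "F ^ card (BS (PD D) 1) = F powr real (card (BS (PD D) 1))"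
    using F_ge1 by (simp add: powr_realpow)
  also have "\<dots> \<le> F powr (3 * (real l * \<delta> * real N + 1))"
    using F_ge1 e by (intro powr_mono) auto
  finally have "F ^ card (BS (PD D) 1) \<le> F powr (3 * (real l * \<delta> * real N + 1))" .
  moreover have "0 \<le> T" unfolding T_def by simp
  ultimately show ?thesis using ch by (meson mult_left_mono order_trans)
qed

lemma card_X: "finite X \<and> real (card X) \<le> 2 ^ (N div l + 1) * (T * F powr (3 * (real l * \<delta> * real N + 1)))"
proof -
  define K where "K = T * F powr (3 * (real l * \<delta> * real N + 1))"
  have fD: "finite Dset" unfolding Dset_def
    by (rule finite_subset[of _ "Pow {..N div l}"]) auto
  have cD: "card Dset \<le> 2 ^ (N div l + 1)"
  proof -
    have "card Dset \<le> card (Pow {..N div l})" by (rule card_mono) (auto simp: Dset_def)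
    then show ?thesis by (simp add: card_Pow)
  qed
  have fS: "finite (SIGMA D:Dset. Cells (PD D) 1)" using fD card_cells_D by auto
  have "card X \<le> card (SIGMA D:Dset. Cells (PD D) 1)" unfolding X_def by (rule card_image_le[OF fS])
  also have "\<dots> = (\<Sum>D\<in>Dset. card (Cells (PD D) 1))" using fD card_cells_D by (simp add: card_SigmaI)
  finally have "real (card X) \<le> (\<Sum>D\<in>Dset. real (card (Cells (PD D) 1)))"
    by (metis of_nat_le_iff of_nat_sum)
  also have "\<dots> \<le> real (card Dset) * K" unfolding K_def
    by (rule sum_bounded_above) (use card_cells_D in auto)
  also have "\<dots> \<le> 2 ^ (N div l + 1) * K"
  proof (rule mult_right_mono)
    show "real (card Dset) \<le> 2 ^ (N div l + 1)" using cD by (metis of_nat_le_iff of_nat_numeral of_nat_power)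
    show "0 \<le> K" unfolding K_def T_def by simp
  qed
  finally show ?thesis unfolding K_def using fS X_def by simp
qed

end


context cfg
begin

definition "c2 = 2 * pi / (\<bar>sin \<alpha>\<bar> * (b * r powr (real q + 2 * real (q*k))))"

lemma lnR: "ln R = - real (q*k) * ln r" unfolding R_def using r0 by simp

lemma Pw2: "Pw 2 = r powr (real q + 2 * real (q*k)) * exp (real N * ln R)"
proof -
  have "real q - real (q*k) * (real N - real (2::nat)) = (real q + 2 * real (q*k)) + (- real (q*k) * real N)"
    by (simp add: algebra_simps)
  then have "Pw 2 = r powr ((real q + 2 * real (q*k)) + (- real (q*k) * real N))"
    unfolding Pw_def by (simp only:)
  also have "\<dots> = r powr (real q + 2 * real (q*k)) * r powr (- real (q*k) * real N)" by (rule powr_add)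
  also have "r powr (- real (q*k) * real N) = exp (real N * ln R)"
    unfolding lnR powr_def using r0 by (simp add: algebra_simps)
  finally show ?thesis .
qed

lemma Dm_eq: "Dm = c2 * exp (- (real N * ln R))"
  unfolding Dm_def c2_def Pw2 by (simp add: exp_minus field_simps)

lemma c2_pos: "0 < c2" unfolding c2_def using sa b0 r0 by (simp add: \<alpha>_def)

lemma F_le: "F \<le> 5 * R^2"
  unfolding F_def using R_gt1 by (simp add: power2_eq_square) (smt (verit) mult_le_cancel_right1)

lemma lnF: "ln F \<le> ln 5 + 2 * ln R"
proof -
  have "ln F \<le> ln (5 * R^2)" using F_le F_ge1 by (subst ln_le_cancel_iff) auto
  also have "\<dots> = ln 5 + 2 * ln R" using R_pos by (simp add: ln_mult ln_realpow)
  finally show ?thesis .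
qed

lemma lnR_ge: "ln (1/r) \<le> ln R"
  using R_ge r0 R_pos by (subst ln_le_cancel_iff) auto

end

locale cfg3 = cfg2 +
  fixes s :: real
  assumes s0: "0 < s" and d0: "0 \<le> \<delta>"
    and c_l: "ln 2 / real l \<le> s * ln (1/r) / 4"
    and c_d1: "3 * real l * \<delta> * ln 5 \<le> s * ln (1/r) / 4"
    and c_d2: "6 * real l * \<delta> \<le> s / 4"
begin

lemma term_bound: "real (card X) * Dm powr s \<le> (2 * T * F^3 * c2 powr s) * exp (- (s * ln (1/r) / 4) * real N)"
proof -
  define L where "L = ln R"
  define lam where "lam = ln (1/r)"
  have lam0: "0 < lam" unfolding lam_def using r0 r1 by simp
  have Llam: "lam \<le> L" unfolding L_def lam_def by (rule lnR_ge)
  have F0: "0 < F" using F_ge1 by simp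
  have T0: "0 \<le> T" unfolding T_def by simp
  have e1: "(2::real) ^ (N div l + 1) \<le> 2 * exp (ln 2 * real N / real l)"
  proof -
    have "real (N div l) \<le> real N / real l" by (rule of_nat_div_le_of_nat)
    then have "real (N div l) * ln 2 \<le> real N / real l * ln 2" by (rule mult_right_mono) simp
    then have "exp (real (N div l) * ln 2) \<le> exp (ln 2 * real N / real l)"
      by (simp add: mult.commute)
    moreover have "(2::real) ^ (N div l) = exp (real (N div l) * ln 2)"
      by (simp add: exp_of_nat_mult)
    ultimately show ?thesis by simp
  qed
  have e2: "F powr (3 * (real l * \<delta> * real N + 1)) = F^3 * exp (3 * real l * \<delta> * real N * ln F)"
  proof -
    have "F powr (3 * (real l * \<delta> * real N + 1)) = F powr (3 * real l * \<delta> * real N) * F powr 3"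
      by (simp add: powr_add[symmetric] algebra_simps)
    moreover have "F powr 3 = F^3" using F0 powr_realpow[of F 3] by simp
    moreover have "F powr (3 * real l * \<delta> * real N) = exp (3 * real l * \<delta> * real N * ln F)"
      unfolding powr_def using F0 by simp
    ultimately show ?thesis by simp
  qed
  have e3: "Dm powr s = c2 powr s * exp (- (s * real N * L))"
  proof -
    have "Dm powr s = c2 powr s * exp (- (real N * ln R)) powr s"
      unfolding Dm_eq using c2_pos by (simp add: powr_mult)
    also have "exp (- (real N * ln R)) powr s = exp (- (s * real N * L))"
      unfolding powr_def L_def by (simp add: algebra_simps)
    finally show ?thesis .
  qed
  have expo: "ln 2 * real N / real l + 3 * real l * \<delta> * real N * ln F - s * real N * L \<le> - (s * lam / 4) * real N"
  proof -
    have a: "ln 2 / real l \<le> s * lam / 4" using c_l unfolding lam_def .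
    have b: "3 * real l * \<delta> * ln F \<le> 3 * real l * \<delta> * ln 5 + 6 * real l * \<delta> * L"
    proof -
      have "3 * real l * \<delta> * ln F \<le> 3 * real l * \<delta> * (ln 5 + 2 * L)"
        using lnF d0 unfolding L_def by (intro mult_left_mono) auto
      then show ?thesis by (simp add: algebra_simps)
    qed
    have c: "3 * real l * \<delta> * ln 5 \<le> s * lam / 4" using c_d1 unfolding lam_def .
    have d: "6 * real l * \<delta> * L \<le> s / 4 * L" using c_d2 Llam lam0 by (intro mult_right_mono) auto
    have "ln 2 / real l + 3 * real l * \<delta> * ln F - s * L \<le> s * lam / 4 + s * lam / 4 + s / 4 * L - s * L"
      using a b c d by linarith
    also have "\<dots> \<le> - (s * lam / 4)"
    proof -
      have "s * lam \<le> s * L" using Llam s0 by (intro mult_left_mono) auto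
      then show ?thesis by linarith
    qed
    finally have "ln 2 / real l + 3 * real l * \<delta> * ln F - s * L \<le> - (s * lam / 4)" .
    then have "real N * (ln 2 / real l + 3 * real l * \<delta> * ln F - s * L) \<le> real N * (- (s * lam / 4))"
      by (intro mult_left_mono) auto
    then show ?thesis by (simp add: algebra_simps)
  qed
  have "real (card X) * Dm powr s \<le> (2 ^ (N div l + 1) * (T * F powr (3 * (real l * \<delta> * real N + 1)))) * Dm powr s"
    using card_X by (intro mult_right_mono) auto
  also have "\<dots> \<le> (2 * exp (ln 2 * real N / real l) * (T * (F^3 * exp (3 * real l * \<delta> * real N * ln F)))) * (c2 powr s * exp (- (s * real N * L)))"
    unfolding e2 e3 using T0 F0 by (intro mult_right_mono e1) auto
  also have "\<dots> = (2 * T * F^3 * c2 powr s) * exp (ln 2 * real N / real l + 3 * real l * \<delta> * real N * ln F - s * real N * L)"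
    by (simp add: exp_add exp_diff exp_minus field_simps)
  also have "\<dots> \<le> (2 * T * F^3 * c2 powr s) * exp (- (s * lam / 4) * real N)"
    using expo T0 F0 by (intro mult_left_mono) auto
  finally show ?thesis unfolding lam_def .
qed

end



lemma exists_Wn:
  assumes "cfg3 r b \<theta> q k N l \<delta> s"
  shows "\<exists>Wn::nat \<Rightarrow> real set. (\<forall>j. bounded (Wn j) \<and> diameter (Wn j) \<le> cfg.Dm r b \<theta> q k N)
     \<and> Eqk r \<gamma> b \<theta> q k \<delta> N \<subseteq> (\<Union>j. Wn j)
     \<and> (\<Sum>j. ennreal (diameter (Wn j) powr s)) \<le> ennreal (2 * cfg.T r b q k * cfg.F r q k ^ 3 * cfg.c2 r b \<theta> q k powr s * exp (- (s * ln (1/r) / 4) * real N))"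
proof -
  interpret C: cfg3 r \<gamma> b \<theta> q k N l \<delta> s by fact
  have fX: "finite C.X" using C.card_X by simp
  obtain h where h: "bij_betw h {0..<card C.X} C.X" using ex_bij_betw_nat_finite[OF fX] by blast
  define Wn where "Wn j = (if j < card C.X then h j else {})" for j
  have hX: "j < card C.X \<Longrightarrow> h j \<in> C.X" for j using h by (auto simp: bij_betw_def)
  have bd: "bounded (Wn j) \<and> diameter (Wn j) \<le> C.Dm" for j
  proof (cases "j < card C.X")
    case True then show ?thesis unfolding Wn_def using C.X_sets[OF hX[OF True]] by simp
  next
    case False then show ?thesis unfolding Wn_def using C.Dm_pos by simp
  qed
  have cov: "Eqk r \<gamma> b \<theta> q k \<delta> N \<subseteq> (\<Union>j. Wn j)"
  proof
    fix x assume "x \<in> Eqk r \<gamma> b \<theta> q k \<delta> N"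
    then obtain y where y: "y \<in> C.X" "x \<in> y" using C.cover by blast
    have "y \<in> h ` {0..<card C.X}" using y h unfolding bij_betw_def by simp
    then obtain j where "j < card C.X" "h j = y" by auto
    then show "x \<in> (\<Union>j. Wn j)" using y unfolding Wn_def by auto
  qed
  have "(\<Sum>j. ennreal (diameter (Wn j) powr s)) = (\<Sum>j<card C.X. ennreal (diameter (Wn j) powr s))"
    by (rule suminf_finite) (auto simp: Wn_def)
  also have "\<dots> = ennreal (\<Sum>j<card C.X. diameter (Wn j) powr s)" by (rule sum_ennreal) simp
  also have "\<dots> \<le> ennreal (real (card C.X) * C.Dm powr s)"
  proof (rule ennreal_leI)
    have "(\<Sum>j<card C.X. diameter (Wn j) powr s) \<le> of_nat (card {..<card C.X}) * C.Dm powr s"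
    proof (rule sum_bounded_above)
      fix j assume "j \<in> {..<card C.X}"
      show "diameter (Wn j) powr s \<le> C.Dm powr s"
        using bd[of j] diameter_ge_0[of "Wn j"] C.s0 by (intro powr_mono2) auto
    qed
    then show "(\<Sum>j<card C.X. diameter (Wn j) powr s) \<le> real (card C.X) * C.Dm powr s" by simp
  qed
  also have "\<dots> \<le> ennreal (2 * C.T * C.F ^ 3 * C.c2 powr s * exp (- (s * ln (1/r) / 4) * real N))"
    by (rule ennreal_leI) (rule C.term_bound)
  finally show ?thesis using bd cov by blast
qed


lemma per_qk:
  assumes cf: "cfg r b \<theta> q k" and l1: "1 \<le> l" and ax: "cfg3_axioms r l \<delta> s"
    and d0: "0 < d" and e0: "0 < \<epsilon>"
  shows "\<exists>W N0. (\<forall>N j. bounded (W N j) \<and> diameter (W N j) \<le> d)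
     \<and> (\<forall>N\<ge>N0. Eqk r \<gamma> b \<theta> q k \<delta> N \<subseteq> (\<Union>j. W N j))
     \<and> (\<Sum>N. \<Sum>j. ennreal (diameter (W N j) powr s)) \<le> ennreal \<epsilon>"
proof -
  interpret C: cfg r \<gamma> b \<theta> q k 0 by fact
  have s0: "0 < s" using ax unfolding cfg3_axioms_def by simp
  define A where "A = 2 * C.T * C.F ^ 3 * C.c2 powr s"
  have A0: "0 \<le> A" unfolding A_def C.T_def using C.F_ge1 by simp
  define lam where "lam = ln (1/r)"
  have lam0: "0 < lam" unfolding lam_def using C.r0 C.r1 by simp
  define \<sigma> where "\<sigma> = exp (- (s * lam / 8))"
  have sg0: "0 < \<sigma>" and sg1: "\<sigma> < 1" unfolding \<sigma>_def using s0 lam0 by auto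
  define L where "L = ln C.R"
  have L0: "0 < L" unfolding L_def using C.R_gt1 by simp
  define u where "u = exp (- L)"
  have u0: "0 < u" and u1: "u < 1" unfolding u_def using L0 by auto
  have expN: "exp (- (s * ln (1/r) / 4) * real N) = \<sigma>^N * \<sigma>^N" for N
  proof -
    have "exp (- (s * ln (1/r) / 4) * real N) = exp (real N * (- (s * lam / 8)) + real N * (- (s * lam / 8)))"
      unfolding lam_def by (simp add: algebra_simps)
    then show ?thesis unfolding \<sigma>_def by (simp only: exp_add exp_of_nat_mult)
  qed
  have DmN: "cfg.Dm r b \<theta> q k N = C.c2 * u ^ N" for N
  proof -
    have "cfg.Dm r b \<theta> q k N = C.c2 * exp (- (real N * L))" unfolding L_def by (rule cfg.Dm_eq[OF cf])
    also have "exp (- (real N * L)) = u ^ N" unfolding u_def by (simp add: exp_of_nat_mult[symmetric])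
    finally show ?thesis .
  qed
  have ev1: "eventually (\<lambda>N. C.c2 * u ^ N < d) sequentially"
  proof -
    have "(\<lambda>N. C.c2 * u ^ N) \<longlonglongrightarrow> C.c2 * 0" using u0 u1 by (intro tendsto_intros) auto
    then show ?thesis using d0 by (intro order_tendstoD(2)) auto
  qed
  have ev2: "eventually (\<lambda>N. A * \<sigma> ^ N / (1 - \<sigma>) < \<epsilon>) sequentially"
  proof -
    have "(\<lambda>N. A * \<sigma> ^ N / (1 - \<sigma>)) \<longlonglongrightarrow> A * 0 / (1 - \<sigma>)" using sg0 sg1 by (intro tendsto_intros) auto
    then show ?thesis using e0 by (intro order_tendstoD(2)) auto
  qed
  obtain N0 where N0: "\<And>N. N \<ge> N0 \<Longrightarrow> C.c2 * u ^ N < d \<and> A * \<sigma> ^ N / (1 - \<sigma>) < \<epsilon>"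
    using eventually_conj[OF ev1 ev2] unfolding eventually_sequentially by blast
  define N1 where "N1 = max N0 1"
  have c3: "cfg3 r b \<theta> q k N l \<delta> s" if "N1 \<le> N" for N
    using cf l1 ax that unfolding cfg3_def cfg2_def cfg2_axioms_def N1_def by auto
  define Pr where "Pr N Wn \<longleftrightarrow> ((\<forall>j. bounded (Wn j) \<and> diameter (Wn j) \<le> cfg.Dm r b \<theta> q k N)
     \<and> Eqk r \<gamma> b \<theta> q k \<delta> N \<subseteq> (\<Union>j. Wn j)
     \<and> (\<Sum>j. ennreal (diameter (Wn j) powr s)) \<le> ennreal (A * exp (- (s * ln (1/r) / 4) * real N)))"
    for N and Wn :: "nat \<Rightarrow> real set"
  have ex: "\<exists>Wn. N1 \<le> N \<longrightarrow> Pr N Wn" for N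
  proof (cases "N1 \<le> N")
    case True
    from exists_Wn[OF c3[OF True], of \<gamma>] obtain Wn where "Pr N Wn" unfolding Pr_def A_def by blast
    then show ?thesis by blast
  qed simp
  have "\<forall>N. \<exists>Wn. N1 \<le> N \<longrightarrow> Pr N Wn" using ex by blast
  then have "\<exists>W0. \<forall>N. N1 \<le> N \<longrightarrow> Pr N (W0 N)" by (rule choice)
  then obtain W0 where W0': "\<forall>N. N1 \<le> N \<longrightarrow> Pr N (W0 N)" by blast
  have W0: "\<And>N. N1 \<le> N \<Longrightarrow> (\<forall>j. bounded (W0 N j) \<and> diameter (W0 N j) \<le> cfg.Dm r b \<theta> q k N)
     \<and> Eqk r \<gamma> b \<theta> q k \<delta> N \<subseteq> (\<Union>j. W0 N j)
     \<and> (\<Sum>j. ennreal (diameter (W0 N j) powr s)) \<le> ennreal (A * exp (- (s * ln (1/r) / 4) * real N))"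
    using W0' unfolding Pr_def by blast
  define W where "W N j = (if N1 \<le> N then W0 N j else {})" for N j
  have bdW: "bounded (W N j) \<and> diameter (W N j) \<le> d" for N j
  proof (cases "N1 \<le> N")
    case True
    then have "N0 \<le> N" unfolding N1_def by simp
    then have "cfg.Dm r b \<theta> q k N < d" using N0[OF \<open>N0 \<le> N\<close>] DmN[of N] by simp
    moreover have "bounded (W0 N j) \<and> diameter (W0 N j) \<le> cfg.Dm r b \<theta> q k N" using W0[OF True] by blast
    moreover have "W N j = W0 N j" unfolding W_def using True by simp
    ultimately show ?thesis by simp
  next
    case False then show ?thesis unfolding W_def using d0 by simp
  qed
  have covW: "\<forall>N\<ge>N1. Eqk r \<gamma> b \<theta> q k \<delta> N \<subseteq> (\<Union>j. W N j)"
    using W0 unfolding W_def by auto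
  have inner: "(\<Sum>j. ennreal (diameter (W N j) powr s)) \<le> ennreal (A * \<sigma> ^ N1 * \<sigma> ^ N)" for N
  proof (cases "N1 \<le> N")
    case True
    have "(\<Sum>j. ennreal (diameter (W N j) powr s)) \<le> ennreal (A * exp (- (s * ln (1/r) / 4) * real N))"
      using W0[OF True] unfolding W_def using True by simp
    also have "\<dots> \<le> ennreal (A * \<sigma> ^ N1 * \<sigma> ^ N)"
    proof (rule ennreal_leI)
      have "\<sigma> ^ N \<le> \<sigma> ^ N1" using True sg0 sg1 by (intro power_decreasing) auto
      then have "\<sigma> ^ N * \<sigma> ^ N \<le> \<sigma> ^ N1 * \<sigma> ^ N" using sg0 by (intro mult_right_mono) auto
      then show "A * exp (- (s * ln (1/r) / 4) * real N) \<le> A * \<sigma> ^ N1 * \<sigma> ^ N"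
        unfolding expN using A0 by (simp add: mult.assoc mult_left_mono)
    qed
    finally show ?thesis .
  next
    case False then show ?thesis unfolding W_def by simp
  qed
  have "(\<Sum>N. \<Sum>j. ennreal (diameter (W N j) powr s)) \<le> (\<Sum>N. ennreal (A * \<sigma> ^ N1 * \<sigma> ^ N))"
    by (intro suminf_le inner summableI)
  also have "\<dots> = ennreal (\<Sum>N. A * \<sigma> ^ N1 * \<sigma> ^ N)"
    using A0 sg0 sg1 by (intro suminf_ennreal2) (auto intro!: summable_mult summable_geometric)
  also have "\<dots> \<le> ennreal \<epsilon>"
  proof (rule ennreal_leI)
    have "(\<Sum>N. A * \<sigma> ^ N1 * \<sigma> ^ N) = A * \<sigma> ^ N1 * (1 / (1 - \<sigma>))"
      using sg0 sg1 by (simp add: suminf_mult suminf_geometric summable_geometric)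
    also have "\<dots> < \<epsilon>" using N0[of N1] unfolding N1_def by simp
    finally show "(\<Sum>N. A * \<sigma> ^ N1 * \<sigma> ^ N) \<le> \<epsilon>" by simp
  qed
  finally have "(\<Sum>N. \<Sum>j. ennreal (diameter (W N j) powr s)) \<le> ennreal \<epsilon>" .
  then show ?thesis using bdW covW by blast
qed



theorem lemma4p4:
  fixes r \<gamma> b \<theta> :: real
  assumes "0 < r" "r < 1" "0 < b" "\<theta> / pi \<notin> \<rat>"
  shows "hausdorff_dim (Eset r \<gamma> b \<theta>) = 0"
proof (rule dim_zero)
  fix s :: real assume s0: "0 < s"
  have cf: "cfg r b \<theta> q k" if "1 \<le> q" "1 \<le> k" for q k
  proof -
    have "sin (real q * real k * \<theta>) \<noteq> 0"
    proof
      assume "sin (real q * real k * \<theta>) = 0"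
      then obtain m :: int where m: "real q * real k * \<theta> = of_int m * pi" by (auto simp: sin_zero_iff_int2)
      have qk: "real q * real k \<noteq> 0" using that by simp
      have "\<theta> / pi = of_int m / (real q * real k)" using m qk pi_gt_zero by (simp add: field_simps)
      also have "\<dots> \<in> \<rat>" by (intro Rats_divide Rats_of_int Rats_mult Rats_of_nat)
      finally show False using assms(4) by simp
    qed
    then show ?thesis unfolding cfg_def using assms that by simp
  qed
  define lam where "lam = ln (1/r)"
  have lam0: "0 < lam" unfolding lam_def using assms by simp
  define l :: nat where "l = nat \<lceil>4 * ln 2 / (s * lam)\<rceil> + 1"
  have l1: "1 \<le> l" unfolding l_def by simp
  have lge: "4 * ln 2 / (s * lam) \<le> real l" unfolding l_def by linarith
  define i :: nat where "i = nat \<lceil>12 * real l * ln 5 / (s * lam) + 24 * real l / s\<rceil> + 3"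
  have i3: "3 \<le> i" unfolding i_def by simp
  have ige: "12 * real l * ln 5 / (s * lam) + 24 * real l / s \<le> real i" unfolding i_def by linarith
  have p1: "0 \<le> 12 * real l * ln 5 / (s * lam)" using s0 lam0 by simp
  have p2: "0 \<le> 24 * real l / s" using s0 by simp
  define \<delta> where "\<delta> = 1 / real i"
  have i0: "0 < real i" using i3 by simp
  have ax: "cfg3_axioms r l \<delta> s"
    unfolding cfg3_axioms_def
  proof (intro conjI)
    show "0 < s" by fact
    show "0 \<le> \<delta>" unfolding \<delta>_def by simp
    show "ln 2 / real l \<le> s * ln (1 / r) / 4"
    proof -
      have "4 * ln 2 \<le> real l * (s * lam)" using lge s0 lam0 by (simp add: divide_le_eq mult.commute)
      then show ?thesis using l1 unfolding lam_def by (simp add: divide_le_eq field_simps)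
    qed
    show "3 * real l * \<delta> * ln 5 \<le> s * ln (1 / r) / 4"
    proof -
      have "12 * real l * ln 5 / (s * lam) \<le> real i" using ige p2 by linarith
      then have "12 * real l * ln 5 \<le> real i * (s * lam)" using s0 lam0 by (simp add: divide_le_eq)
      then show ?thesis unfolding \<delta>_def lam_def using i0 by (simp add: field_simps)
    qed
    show "6 * real l * \<delta> \<le> s / 4"
    proof -
      have "24 * real l / s \<le> real i" using ige p1 by linarith
      then have "24 * real l \<le> real i * s" using s0 by (simp add: divide_le_eq)
      then show ?thesis unfolding \<delta>_def using i0 by (simp add: field_simps)
    qed
  qed
  show "hausdorff_measure s (Eset r \<gamma> b \<theta>) = 0"
  proof (rule hm_zero)
    fix d \<eta> :: real assume d0: "0 < d" and e0: "0 < \<eta>"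
    define ep where "ep p = \<eta> * (1/2) ^ Suc p" for p :: nat
    have ep0: "0 < ep p" for p unfolding ep_def using e0 by simp
    define Pp where "Pp p W N0 \<longleftrightarrow> (\<forall>N j. bounded (W N j) \<and> diameter (W N j) \<le> d)
       \<and> (1 \<le> fst (prod_decode p) \<and> 1 \<le> snd (prod_decode p) \<longrightarrow>
            (\<forall>N\<ge>N0. Eqk r \<gamma> b \<theta> (fst (prod_decode p)) (snd (prod_decode p)) \<delta> N \<subseteq> (\<Union>j. W N j)))
       \<and> (\<Sum>N. \<Sum>j. ennreal (diameter (W N j) powr s)) \<le> ennreal (ep p)"
      for p and W :: "nat \<Rightarrow> nat \<Rightarrow> real set" and N0
    have ex: "\<exists>W N0. Pp p W N0" for p
    proof (cases "1 \<le> fst (prod_decode p) \<and> 1 \<le> snd (prod_decode p)")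
      case True
      from per_qk[OF cf[OF conjunct1[OF True] conjunct2[OF True]] l1 ax d0 ep0[of p], of \<gamma>]
      show ?thesis unfolding Pp_def by blast
    next
      case False
      have "Pp p (\<lambda>N j. {}) 0" unfolding Pp_def using False d0 by auto
      then show ?thesis by blast
    qed
    have "\<forall>p. \<exists>WN. Pp p (fst WN) (snd WN)" using ex by simp
    then have "\<exists>f. \<forall>p. Pp p (fst (f p)) (snd (f p))" by (rule choice)
    then obtain f where f: "\<And>p. Pp p (fst (f p)) (snd (f p))" by blast
    define V where "V p = fst (f p)" for p
    define N0 where "N0 p = snd (f p)" for p
    have Vb: "\<And>p N j. bounded (V p N j)" and Vd: "\<And>p N j. diameter (V p N j) \<le> d"
      using f unfolding Pp_def V_def by blast+
    have Vs: "(\<Sum>N. \<Sum>j. ennreal (diameter (V p N j) powr s)) \<le> ennreal (ep p)" for p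
      using f[of p] unfolding Pp_def V_def by blast
    have Vc: "\<And>p N. 1 \<le> fst (prod_decode p) \<Longrightarrow> 1 \<le> snd (prod_decode p) \<Longrightarrow> N0 p \<le> N \<Longrightarrow>
       Eqk r \<gamma> b \<theta> (fst (prod_decode p)) (snd (prod_decode p)) \<delta> N \<subseteq> (\<Union>j. V p N j)"
      using f unfolding Pp_def V_def N0_def by blast
    have cov: "Eset r \<gamma> b \<theta> \<subseteq> (\<Union>p. \<Union>N. \<Union>j. V p N j)"
    proof
      fix x assume "x \<in> Eset r \<gamma> b \<theta>"
      then have xE: "x \<in> (\<Inter>i\<in>{3::nat..}. \<Union>q\<in>{1::nat..}. \<Union>k\<in>{1::nat..}.
          \<Inter>N0. \<Union>N\<in>{N. N \<ge> N0 \<and> N \<ge> 2}. Eqk r \<gamma> b \<theta> q k (1 / real i) N)"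
        unfolding Eset_def .
      have "i \<in> {3::nat..}" using i3 by simp
      from INT_D[OF xE this] have "x \<in> (\<Union>q\<in>{1::nat..}. \<Union>k\<in>{1::nat..}.
          \<Inter>N0. \<Union>N\<in>{N. N \<ge> N0 \<and> N \<ge> 2}. Eqk r \<gamma> b \<theta> q k \<delta> N)"
        unfolding \<delta>_def .
      then obtain q where q1: "q \<in> {1::nat..}" and xq: "x \<in> (\<Union>k\<in>{1::nat..}.
          \<Inter>N0. \<Union>N\<in>{N. N \<ge> N0 \<and> N \<ge> 2}. Eqk r \<gamma> b \<theta> q k \<delta> N)" by (rule UN_E)
      from xq obtain k where k1: "k \<in> {1::nat..}" and xk: "x \<in> (\<Inter>N0. \<Union>N\<in>{N. N \<ge> N0 \<and> N \<ge> 2}. Eqk r \<gamma> b \<theta> q k \<delta> N)"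
        by (rule UN_E)
      have qk: "1 \<le> q" "1 \<le> k" using q1 k1 by auto
      have x: "\<exists>N. N \<ge> M \<and> x \<in> Eqk r \<gamma> b \<theta> q k \<delta> N" for M
      proof -
        have "x \<in> (\<Union>N\<in>{N. N \<ge> M \<and> N \<ge> 2}. Eqk r \<gamma> b \<theta> q k \<delta> N)" using xk by (rule INT_D) simp
        then show ?thesis by blast
      qed
      define p where "p = prod_encode (q, k)"
      have pd: "prod_decode p = (q, k)" unfolding p_def by simp
      obtain N where N: "N \<ge> N0 p" "x \<in> Eqk r \<gamma> b \<theta> q k \<delta> N" using x by blast
      have "x \<in> (\<Union>j. V p N j)" using Vc[of p N] pd qk N by auto
      then show "x \<in> (\<Union>p. \<Union>N. \<Union>j. V p N j)" by blast
    qed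
    have "hausdorff_pre s d (Eset r \<gamma> b \<theta>) \<le> (\<Sum>p. \<Sum>N. \<Sum>j. ennreal (diameter (V p N j) powr s))"
      by (rule hp_cover3[OF cov Vb Vd])
    also have "\<dots> \<le> (\<Sum>p. ennreal (ep p))" by (intro suminf_le Vs summableI)
    also have "\<dots> = ennreal (\<Sum>p. ep p)"
      using ep0 unfolding ep_def by (intro suminf_ennreal2) (auto intro!: summable_mult summable_geometric less_imp_le)
    also have "(\<Sum>p. ep p) = \<eta>"
    proof -
      have "(\<lambda>p. ep p) = (\<lambda>p. (\<eta>/2) * (1/2) ^ p)" unfolding ep_def by (auto simp: field_simps)
      moreover have "(\<Sum>p. (\<eta>/2) * ((1::real)/2) ^ p) = (\<eta>/2) * (1 / (1 - 1/2))"
        by (subst suminf_mult) (auto simp: suminf_geometric summable_geometric)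
      ultimately show ?thesis by simp
    qed
    finally show "hausdorff_pre s d (Eset r \<gamma> b \<theta>) \<le> ennreal \<eta>" .
  qed
qed



end
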